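(* There is no constant $c$ such that every graph in the class $\mathcal{R}_3$ is $c$-colorable.
   Context: All graphs are finite and simple. For a word $w$ and distinct letters $x,y$ occurring in $w$, $x$ and $y$ alternate in $w$ if deleting all letters other than copies of $x$ and $y$ yields a word of the form $xyxy\cdots$ or $yxyx\cdots$ (of even or odd length). A graph $G=(V,E)$ is word-representable if there is a word $w$ over $V$ (each vertex occurring in $w$) such that for all distinct $x,y\in V$, $x$ and $y$ alternate in $w$ iff $(x,y)\in E$. A word is $k$-uniform if each letter occurs exactly $k$ times; $G$ is $k$-word-representable if some $k$-uniform word represents it; the representation number of a word-representable graph is the least such $k$. $\mathcal{R}_3$ is the class of word-representable graphs with representation number exactly $3$. *)

theory Defs
  imports Main
begin

text \<open>Finite simple graphs with vertices drawn from nat (every finite graph is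
isomorphic to one of these): a finite vertex set V and a symmetric irreflexive
edge relation E on V.\<close>

definition simple_graph :: "nat set \<Rightarrow> (nat \<times> nat) set \<Rightarrow> bool" where
  "simple_graph V E \<longleftrightarrow> finite V \<and> E \<subseteq> V \<times> V \<and> sym E \<and> irrefl E"

definition alternate :: "nat list \<Rightarrow> nat \<Rightarrow> nat \<Rightarrow> bool" where
  "alternate w x y \<longleftrightarrow>
     (let u = filter (\<lambda>z. z = x \<or> z = y) w in
        \<forall>i. Suc i < length u \<longrightarrow> u ! i \<noteq> u ! Suc i)"

definition represents :: "nat list \<Rightarrow> nat set \<Rightarrow> (nat \<times> nat) set \<Rightarrow> bool" where
  "represents w V E \<longleftrightarrow> set w = V \<and>
     (\<forall>x\<in>V. \<forall>y\<in>V. x \<noteq> y \<longrightarrow> (alternate w x y \<longleftrightarrow> (x, y) \<in> E))"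

definition word_representable :: "nat set \<Rightarrow> (nat \<times> nat) set \<Rightarrow> bool" where
  "word_representable V E \<longleftrightarrow> (\<exists>w. represents w V E)"

definition uniform :: "nat \<Rightarrow> nat list \<Rightarrow> bool" where
  "uniform k w \<longleftrightarrow> (\<forall>x\<in>set w. count_list w x = k)"

definition k_word_representable :: "nat \<Rightarrow> nat set \<Rightarrow> (nat \<times> nat) set \<Rightarrow> bool" where
  "k_word_representable k V E \<longleftrightarrow> (\<exists>w. uniform k w \<and> represents w V E)"

definition representation_number :: "nat set \<Rightarrow> (nat \<times> nat) set \<Rightarrow> nat" where
  "representation_number V E = (LEAST k. k_word_representable k V E)"

definition in_R3 :: "nat set \<Rightarrow> (nat \<times> nat) set \<Rightarrow> bool" where
  "in_R3 V E \<longleftrightarrow> simple_graph V E \<and> word_representable V E \<and> representation_number V E = 3"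

definition colorable :: "nat \<Rightarrow> nat set \<Rightarrow> (nat \<times> nat) set \<Rightarrow> bool" where
  "colorable c V E \<longleftrightarrow> (\<exists>f :: nat \<Rightarrow> nat. (\<forall>v\<in>V. f v < c) \<and> (\<forall>(x, y)\<in>E. f x \<noteq> f y))"

end

theory Submission
  imports Defs
begin

lemma filter_nth: "filter P xs = map (nth xs) (filter (\<lambda>i. P (xs!i)) [0..<length xs])"
proof (induction xs rule: rev_induct)
  case Nil then show ?case by simp
next
  case (snoc a xs)
  have "filter (\<lambda>i. P ((xs@[a])!i)) [0..<length xs] = filter (\<lambda>i. P (xs!i)) [0..<length xs]"
    by (rule filter_cong) (auto simp: nth_append)
  moreover have "map (nth (xs@[a])) (filter (\<lambda>i. P (xs!i)) [0..<length xs]) = map (nth xs) (filter (\<lambda>i. P (xs!i)) [0..<length xs])"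
    by (rule map_cong) (auto simp: nth_append)
  ultimately show ?case using snoc by (simp add: nth_append)
qed

lemma sorted4: assumes "sorted I" "distinct I" "set I = {a,b,c,d}" "a<b" "b<c" "(c::nat)<d"
  shows "I = [a,b,c,d]"
  using sorted_distinct_set_unique[of I "[a,b,c,d]"] assms by auto

lemma alt4_iff: "(\<forall>i. Suc i < length [a,b,c,d] \<longrightarrow> [a,b,c,d]!i \<noteq> [a,b,c,d]!Suc i) \<longleftrightarrow> a\<noteq>b \<and> b\<noteq>c \<and> c\<noteq>d"
proof
  assume "\<forall>i. Suc i < length [a,b,c,d] \<longrightarrow> [a,b,c,d]!i \<noteq> [a,b,c,d]!Suc i"
  from this[rule_format, of 0] this[rule_format, of 1] this[rule_format, of 2] show "a\<noteq>b \<and> b\<noteq>c \<and> c\<noteq>d" by simp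
next
  assume "a\<noteq>b \<and> b\<noteq>c \<and> c\<noteq>d"
  then show "\<forall>i. Suc i < length [a,b,c,d] \<longrightarrow> [a,b,c,d]!i \<noteq> [a,b,c,d]!Suc i"
    by (auto simp: less_Suc_eq)
qed

lemma pos2:
  assumes "count_list w (x::nat) = 2"
  shows "\<exists>p q. p<q \<and> q<length w \<and> w!p=x \<and> w!q=x \<and> (\<forall>i<length w. w!i=x \<longrightarrow> i=p \<or> i=q)"
proof -
  let ?I = "filter (\<lambda>i. w!i = x) [0..<length w]"
  have "count_list w x = length (filter (\<lambda>z. z = x) w)"
    by (induction w) auto
  also have "\<dots> = length ?I" by (subst filter_nth) simp
  finally have "length ?I = 2" using assms by simp
  then obtain p q where I: "?I = [p,q]"
    by (cases ?I rule: list.exhaust; auto; metis Suc_length_conv length_0_conv)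
  have "sorted_wrt (<) ?I" by (intro sorted_wrt_filter) (simp add: sorted_wrt_upt)
  then have "p<q" using I by simp
  have m: "\<And>i. i \<in> set ?I \<longleftrightarrow> i < length w \<and> w!i = x" by auto
  show ?thesis using \<open>p<q\<close> m[of p] m[of q] m I by auto
qed

lemma cross:
  assumes "x \<noteq> y" "p1<q1" "q1<length w" "w!p1=x" "w!q1=x" "\<forall>i<length w. w!i=x \<longrightarrow> i=p1 \<or> i=q1"
    "p2<q2" "q2<length w" "w!p2=y" "w!q2=y" "\<forall>i<length w. w!i=y \<longrightarrow> i=p2 \<or> i=q2"
  shows "alternate w x y \<longleftrightarrow> (p1<p2 \<and> p2<q1 \<and> q1<q2) \<or> (p2<p1 \<and> p1<q2 \<and> q2<q1)"
proof -
  let ?I = "filter (\<lambda>i. w!i = x \<or> w!i = y) [0..<length w]"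
  have u: "filter (\<lambda>z. z = x \<or> z = y) w = map (nth w) ?I" by (subst filter_nth) simp
  have s: "sorted ?I" by (intro sorted_wrt_filter) simp
  have d: "distinct ?I" by simp
  have st: "set ?I = {p1,q1,p2,q2}" using assms by auto
  have ne: "p1\<noteq>p2" "p1\<noteq>q2" "q1\<noteq>p2" "q1\<noteq>q2" using assms by auto
  have A: "alternate w x y \<longleftrightarrow> (\<forall>i. Suc i < length (map (nth w) ?I) \<longrightarrow> map (nth w) ?I!i \<noteq> map (nth w) ?I!Suc i)"
    unfolding alternate_def Let_def u ..
  consider "p1<q1 \<and> q1<p2 \<and> p2<q2" | "p1<p2 \<and> p2<q1 \<and> q1<q2" | "p1<p2 \<and> p2<q2 \<and> q2<q1"
    | "p2<p1 \<and> p1<q1 \<and> q1<q2" | "p2<p1 \<and> p1<q2 \<and> q2<q1" | "p2<q2 \<and> q2<p1 \<and> p1<q1"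
    using ne assms by linarith
  then show ?thesis
  proof cases
    case 1
    then have "?I = [p1,q1,p2,q2]" using sorted4[OF s d] st by auto
    then have "alternate w x y \<longleftrightarrow> (\<forall>i. Suc i < length (map (nth w) ?I) \<longrightarrow> map (nth w) ?I!i \<noteq> map (nth w) ?I!Suc i)" using A by blast
    then show ?thesis unfolding \<open>?I = _\<close> list.map alt4_iff using 1 assms by auto
  next
    case 2
    then have "?I = [p1,p2,q1,q2]" using sorted4[OF s d] st by auto
    then have "alternate w x y \<longleftrightarrow> (\<forall>i. Suc i < length (map (nth w) ?I) \<longrightarrow> map (nth w) ?I!i \<noteq> map (nth w) ?I!Suc i)" using A by blast
    then show ?thesis unfolding \<open>?I = _\<close> list.map alt4_iff using 2 assms by auto
  next
    case 3
    then have "?I = [p1,p2,q2,q1]" using sorted4[OF s d] st by auto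
    then have "alternate w x y \<longleftrightarrow> (\<forall>i. Suc i < length (map (nth w) ?I) \<longrightarrow> map (nth w) ?I!i \<noteq> map (nth w) ?I!Suc i)" using A by blast
    then show ?thesis unfolding \<open>?I = _\<close> list.map alt4_iff using 3 assms by auto
  next
    case 4
    then have "?I = [p2,p1,q1,q2]" using sorted4[OF s d] st by auto
    then have "alternate w x y \<longleftrightarrow> (\<forall>i. Suc i < length (map (nth w) ?I) \<longrightarrow> map (nth w) ?I!i \<noteq> map (nth w) ?I!Suc i)" using A by blast
    then show ?thesis unfolding \<open>?I = _\<close> list.map alt4_iff using 4 assms by auto
  next
    case 5
    then have "?I = [p2,p1,q2,q1]" using sorted4[OF s d] st by auto
    then have "alternate w x y \<longleftrightarrow> (\<forall>i. Suc i < length (map (nth w) ?I) \<longrightarrow> map (nth w) ?I!i \<noteq> map (nth w) ?I!Suc i)" using A by blast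
    then show ?thesis unfolding \<open>?I = _\<close> list.map alt4_iff using 5 assms by auto
  next
    case 6
    then have "?I = [p2,q2,p1,q1]" using sorted4[OF s d] st by auto
    then have "alternate w x y \<longleftrightarrow> (\<forall>i. Suc i < length (map (nth w) ?I) \<longrightarrow> map (nth w) ?I!i \<noteq> map (nth w) ?I!Suc i)" using A by blast
    then show ?thesis unfolding \<open>?I = _\<close> list.map alt4_iff using 6 assms by auto
  qed
qed


definition cr :: "nat \<Rightarrow> nat \<Rightarrow> nat \<Rightarrow> nat \<Rightarrow> bool" where
  "cr a b c d \<longleftrightarrow> (a<c \<and> c<b \<and> b<d) \<or> (c<a \<and> a<d \<and> d<b)"
definition nc :: "nat \<Rightarrow> nat \<Rightarrow> nat \<Rightarrow> nat \<Rightarrow> bool" where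
  "nc a b c d \<longleftrightarrow> b<c \<or> d<a \<or> (a<c \<and> d<b) \<or> (c<a \<and> b<d)"
lemma cr_sym: "cr a b c d \<longleftrightarrow> cr c d a b" unfolding cr_def by auto
lemma nc_sym: "nc a b c d \<longleftrightarrow> nc c d a b" unfolding nc_def by auto
lemma core:
  fixes p0 p1 p2 p3 p4 p5 q0 q1 q2 q3 q4 q5 :: nat
  assumes h0: "cr p0 q0 p1 q1"
    and h1: "cr p0 q0 p2 q2"
    and h2: "cr p1 q1 p2 q2"
    and h3: "cr p3 q3 p4 q4"
    and h4: "cr p3 q3 p5 q5"
    and h5: "cr p4 q4 p5 q5"
    and h6: "cr p0 q0 p3 q3"
    and h7: "cr p1 q1 p4 q4"
    and h8: "cr p2 q2 p5 q5"
    and h9: "nc p0 q0 p4 q4"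
    and h10: "nc p0 q0 p5 q5"
    and h11: "nc p1 q1 p3 q3"
    and h12: "nc p1 q1 p5 q5"
    and h13: "nc p2 q2 p3 q3"
    and h14: "nc p2 q2 p4 q4"
    and h15: "p0<q0"
    and h16: "p1<q1"
    and h17: "p2<q2"
    and h18: "p3<q3"
    and h19: "p4<q4"
    and h20: "p5<q5"
    and h21: "p0<p1"
    and h22: "p1<p2"
  shows False
proof -
  note H = h0 h1 h2 h3 h4 h5 h6 h7 h8 h9 h10 h11 h12 h13 h14
  have o: "p2<q0" "q0<q1" "q1<q2" using h0 h1 h2 h15 h16 h17 h18 h19 h20 h21 h22 unfolding cr_def by auto
  have O3: "(p3<p0 \<and> p0<q3 \<and> q3<p1) \<or> (p0<p3 \<and> p3<p1 \<and> q2<q3) \<or> (p2<p3 \<and> p3<q0 \<and> q0<q3 \<and> q3<q1)" using h6 h11 h13 o h15 h16 h17 h18 h19 h20 h21 h22 unfolding cr_def nc_def by (elim disjE conjE; (linarith | (rule disjI1, intro conjI; linarith) | (rule disjI2, rule disjI1, intro conjI; linarith) | (rule disjI2, rule disjI2, intro conjI; linarith) | (rule disjI2, intro conjI; linarith)))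
  have O4: "(p0<p4 \<and> p4<p1 \<and> p1<q4 \<and> q4<p2) \<or> (q0<p4 \<and> p4<q1 \<and> q1<q4 \<and> q4<q2)" using h7 h9 h14 o h15 h16 h17 h18 h19 h20 h21 h22 unfolding cr_def nc_def by (elim disjE conjE; (linarith | (rule disjI1, intro conjI; linarith) | (rule disjI2, rule disjI1, intro conjI; linarith) | (rule disjI2, rule disjI2, intro conjI; linarith) | (rule disjI2, intro conjI; linarith)))
  have O5: "(p1<p5 \<and> p5<p2 \<and> p2<q5 \<and> q5<q0) \<or> (q1<p5 \<and> p5<q2 \<and> q2<q5) \<or> (p5<p0 \<and> q1<q5 \<and> q5<q2)" using h8 h10 h12 o h15 h16 h17 h18 h19 h20 h21 h22 unfolding cr_def nc_def by (elim disjE conjE; (linarith | (rule disjI1, intro conjI; linarith) | (rule disjI2, rule disjI1, intro conjI; linarith) | (rule disjI2, rule disjI2, intro conjI; linarith) | (rule disjI2, intro conjI; linarith)))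
  show False using O3 O4 O5 h3 h4 h5 o h15 h16 h17 h18 h19 h20 h21 h22 unfolding cr_def by (elim disjE conjE; linarith)
qed

definition EH :: "(nat \<times> nat) set" where
  "EH = {(0,1),(1,0),(0,2),(2,0),(1,2),(2,1),(3,4),(4,3),(3,5),(5,3),(4,5),(5,4),(0,3),(3,0),(1,4),(4,1),(2,5),(5,2)}"

lemma EH_lt: "(x,y)\<in>EH \<Longrightarrow> x<6 \<and> y<6" by (auto simp: EH_def)
lemma sym_EH: "sym EH" unfolding sym_def EH_def by simp
lemma irr_EH: "irrefl EH" unfolding irrefl_def EH_def by auto

lemma cr_nc: assumes "a<b" "c<d" "a\<noteq>c" "a\<noteq>d" "b\<noteq>c" "b\<noteq>d" "\<not> cr a b c d" shows "nc a b c d"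
  using assms unfolding cr_def nc_def by linarith

lemma no2:
  assumes "\<forall>x\<in>{0..<6::nat}. count_list w x = 2"
    and "\<forall>x\<in>{0..<6::nat}. \<forall>y\<in>{0..<6}. x \<noteq> y \<longrightarrow> (alternate w x y \<longleftrightarrow> (x,y) \<in> EH)"
  shows False
proof -
  have "\<forall>x\<in>{0..<6::nat}. \<exists>pq. fst pq < snd pq \<and> snd pq<length w \<and> w!fst pq=x \<and> w!snd pq=x \<and> (\<forall>i<length w. w!i=x \<longrightarrow> i=fst pq \<or> i=snd pq)"
    using pos2 assms(1) by fastforce
  then obtain F where F: "\<And>x. x\<in>{0..<6::nat} \<Longrightarrow> fst (F x) < snd (F x) \<and> snd (F x)<length w \<and> w!fst (F x)=x \<and> w!snd (F x)=x \<and> (\<forall>i<length w. w!i=x \<longrightarrow> i=fst (F x) \<or> i=snd (F x))"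
    by metis
  define p where "p x = fst (F x)" for x
  define q where "q x = snd (F x)" for x
  have P: "\<And>x. x\<in>{0..<6::nat} \<Longrightarrow> p x < q x \<and> q x<length w \<and> w!p x=x \<and> w!q x=x \<and> (\<forall>i<length w. w!i=x \<longrightarrow> i=p x \<or> i=q x)"
    using F unfolding p_def q_def by blast
  have C: "\<And>x y. x\<in>{0..<6::nat} \<Longrightarrow> y\<in>{0..<6} \<Longrightarrow> x\<noteq>y \<Longrightarrow> ((x,y)\<in>EH \<longleftrightarrow> cr (p x) (q x) (p y) (q y))"
  proof -
    fix x y :: nat assume xy: "x\<in>{0..<6}" "y\<in>{0..<6}" "x\<noteq>y"
    show "((x,y)\<in>EH \<longleftrightarrow> cr (p x) (q x) (p y) (q y))"
      using cross[of x y "p x" "q x" w "p y" "q y"] P[OF xy(1)] P[OF xy(2)] assms(2) xy unfolding cr_def by blast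
  qed
  have D: "\<And>x y. x\<in>{0..<6::nat} \<Longrightarrow> y\<in>{0..<6} \<Longrightarrow> x\<noteq>y \<Longrightarrow> p x \<noteq> p y \<and> p x \<noteq> q y \<and> q x \<noteq> q y \<and> q x \<noteq> p y"
    using P by metis
  have CR: "\<And>x y. x\<in>{0..<6::nat} \<Longrightarrow> y\<in>{0..<6} \<Longrightarrow> x\<noteq>y \<Longrightarrow> (x,y)\<in>EH \<Longrightarrow> cr (p x) (q x) (p y) (q y)"
    using C by blast
  have NC: "\<And>x y. x\<in>{0..<6::nat} \<Longrightarrow> y\<in>{0..<6} \<Longrightarrow> x\<noteq>y \<Longrightarrow> (x,y)\<notin>EH \<Longrightarrow> nc (p x) (q x) (p y) (q y)"
  proof -
    fix x y :: nat assume xy: "x\<in>{0..<6}" "y\<in>{0..<6}" "x\<noteq>y" "(x,y)\<notin>EH"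
    show "nc (p x) (q x) (p y) (q y)"
      using cr_nc[of "p x" "q x" "p y" "q y"] C[OF xy(1-3)] xy(4) D[OF xy(1-3)] P[OF xy(1)] P[OF xy(2)] by blast
  qed
  have f01: "cr (p 0) (q 0) (p 1) (q 1)" by (rule CR) (auto simp: EH_def)
  have f02: "cr (p 0) (q 0) (p 2) (q 2)" by (rule CR) (auto simp: EH_def)
  have f03: "cr (p 0) (q 0) (p 3) (q 3)" by (rule CR) (auto simp: EH_def)
  have f04: "nc (p 0) (q 0) (p 4) (q 4)" by (rule NC) (auto simp: EH_def)
  have f05: "nc (p 0) (q 0) (p 5) (q 5)" by (rule NC) (auto simp: EH_def)
  have f10: "cr (p 1) (q 1) (p 0) (q 0)" by (rule CR) (auto simp: EH_def)
  have f12: "cr (p 1) (q 1) (p 2) (q 2)" by (rule CR) (auto simp: EH_def)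
  have f13: "nc (p 1) (q 1) (p 3) (q 3)" by (rule NC) (auto simp: EH_def)
  have f14: "cr (p 1) (q 1) (p 4) (q 4)" by (rule CR) (auto simp: EH_def)
  have f15: "nc (p 1) (q 1) (p 5) (q 5)" by (rule NC) (auto simp: EH_def)
  have f20: "cr (p 2) (q 2) (p 0) (q 0)" by (rule CR) (auto simp: EH_def)
  have f21: "cr (p 2) (q 2) (p 1) (q 1)" by (rule CR) (auto simp: EH_def)
  have f23: "nc (p 2) (q 2) (p 3) (q 3)" by (rule NC) (auto simp: EH_def)
  have f24: "nc (p 2) (q 2) (p 4) (q 4)" by (rule NC) (auto simp: EH_def)
  have f25: "cr (p 2) (q 2) (p 5) (q 5)" by (rule CR) (auto simp: EH_def)
  have f30: "cr (p 3) (q 3) (p 0) (q 0)" by (rule CR) (auto simp: EH_def)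
  have f31: "nc (p 3) (q 3) (p 1) (q 1)" by (rule NC) (auto simp: EH_def)
  have f32: "nc (p 3) (q 3) (p 2) (q 2)" by (rule NC) (auto simp: EH_def)
  have f34: "cr (p 3) (q 3) (p 4) (q 4)" by (rule CR) (auto simp: EH_def)
  have f35: "cr (p 3) (q 3) (p 5) (q 5)" by (rule CR) (auto simp: EH_def)
  have f40: "nc (p 4) (q 4) (p 0) (q 0)" by (rule NC) (auto simp: EH_def)
  have f41: "cr (p 4) (q 4) (p 1) (q 1)" by (rule CR) (auto simp: EH_def)
  have f42: "nc (p 4) (q 4) (p 2) (q 2)" by (rule NC) (auto simp: EH_def)
  have f43: "cr (p 4) (q 4) (p 3) (q 3)" by (rule CR) (auto simp: EH_def)
  have f45: "cr (p 4) (q 4) (p 5) (q 5)" by (rule CR) (auto simp: EH_def)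
  have f50: "nc (p 5) (q 5) (p 0) (q 0)" by (rule NC) (auto simp: EH_def)
  have f51: "nc (p 5) (q 5) (p 1) (q 1)" by (rule NC) (auto simp: EH_def)
  have f52: "cr (p 5) (q 5) (p 2) (q 2)" by (rule CR) (auto simp: EH_def)
  have f53: "cr (p 5) (q 5) (p 3) (q 3)" by (rule CR) (auto simp: EH_def)
  have f54: "cr (p 5) (q 5) (p 4) (q 4)" by (rule CR) (auto simp: EH_def)
  have pq0: "p 0 < q 0" using P[of 0] by simp
  have pq1: "p 1 < q 1" using P[of 1] by simp
  have pq2: "p 2 < q 2" using P[of 2] by simp
  have pq3: "p 3 < q 3" using P[of 3] by simp
  have pq4: "p 4 < q 4" using P[of 4] by simp
  have pq5: "p 5 < q 5" using P[of 5] by simp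
  have ne: "p 0 \<noteq> p 1" "p 0 \<noteq> p 2" "p 1 \<noteq> p 2" using D[of 0 1] D[of 0 2] D[of 1 2] by auto
  have c012: False if "p 0 < p 1" "p 1 < p 2"
    by (rule core[of "p 0" "q 0" "p 1" "q 1" "p 2" "q 2" "p 3" "q 3" "p 4" "q 4" "p 5" "q 5"]) (rule f01 f02 f03 f04 f05 f10 f12 f13 f14 f15 f20 f21 f23 f24 f25 f30 f31 f32 f34 f35 f40 f41 f42 f43 f45 f50 f51 f52 f53 f54 pq0 pq1 pq2 pq3 pq4 pq5 that)+
  have c021: False if "p 0 < p 2" "p 2 < p 1"
    by (rule core[of "p 0" "q 0" "p 2" "q 2" "p 1" "q 1" "p 3" "q 3" "p 5" "q 5" "p 4" "q 4"]) (rule f01 f02 f03 f04 f05 f10 f12 f13 f14 f15 f20 f21 f23 f24 f25 f30 f31 f32 f34 f35 f40 f41 f42 f43 f45 f50 f51 f52 f53 f54 pq0 pq1 pq2 pq3 pq4 pq5 that)+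
  have c102: False if "p 1 < p 0" "p 0 < p 2"
    by (rule core[of "p 1" "q 1" "p 0" "q 0" "p 2" "q 2" "p 4" "q 4" "p 3" "q 3" "p 5" "q 5"]) (rule f01 f02 f03 f04 f05 f10 f12 f13 f14 f15 f20 f21 f23 f24 f25 f30 f31 f32 f34 f35 f40 f41 f42 f43 f45 f50 f51 f52 f53 f54 pq0 pq1 pq2 pq3 pq4 pq5 that)+
  have c120: False if "p 1 < p 2" "p 2 < p 0"
    by (rule core[of "p 1" "q 1" "p 2" "q 2" "p 0" "q 0" "p 4" "q 4" "p 5" "q 5" "p 3" "q 3"]) (rule f01 f02 f03 f04 f05 f10 f12 f13 f14 f15 f20 f21 f23 f24 f25 f30 f31 f32 f34 f35 f40 f41 f42 f43 f45 f50 f51 f52 f53 f54 pq0 pq1 pq2 pq3 pq4 pq5 that)+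
  have c201: False if "p 2 < p 0" "p 0 < p 1"
    by (rule core[of "p 2" "q 2" "p 0" "q 0" "p 1" "q 1" "p 5" "q 5" "p 3" "q 3" "p 4" "q 4"]) (rule f01 f02 f03 f04 f05 f10 f12 f13 f14 f15 f20 f21 f23 f24 f25 f30 f31 f32 f34 f35 f40 f41 f42 f43 f45 f50 f51 f52 f53 f54 pq0 pq1 pq2 pq3 pq4 pq5 that)+
  have c210: False if "p 2 < p 1" "p 1 < p 0"
    by (rule core[of "p 2" "q 2" "p 1" "q 1" "p 0" "q 0" "p 5" "q 5" "p 4" "q 4" "p 3" "q 3"]) (rule f01 f02 f03 f04 f05 f10 f12 f13 f14 f15 f20 f21 f23 f24 f25 f30 f31 f32 f34 f35 f40 f41 f42 f43 f45 f50 f51 f52 f53 f54 pq0 pq1 pq2 pq3 pq4 pq5 that)+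
  show False using ne c012 c021 c102 c120 c201 c210 by (metis linorder_neqE_nat less_trans)
qed


fun adj_ok :: "nat list \<Rightarrow> bool" where
  "adj_ok (a#b#r) = (a \<noteq> b \<and> adj_ok (b#r))"
| "adj_ok _ = True"

lemma adj_ok_iff: "adj_ok u \<longleftrightarrow> (\<forall>i. Suc i < length u \<longrightarrow> u!i \<noteq> u!Suc i)"
proof (induction u rule: adj_ok.induct)
  case (1 a b r)
  show ?case
  proof
    assume h: "adj_ok (a#b#r)"
    show "\<forall>i. Suc i < length (a#b#r) \<longrightarrow> (a#b#r)!i \<noteq> (a#b#r)!Suc i"
    proof (intro allI impI)
      fix i assume "Suc i < length (a#b#r)"
      then show "(a#b#r)!i \<noteq> (a#b#r)!Suc i" using h 1 by (cases i) auto
    qed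
  next
    assume h: "\<forall>i. Suc i < length (a#b#r) \<longrightarrow> (a#b#r)!i \<noteq> (a#b#r)!Suc i"
    have "a \<noteq> b" using h[rule_format, of 0] by simp
    moreover have "\<forall>i. Suc i < length (b#r) \<longrightarrow> (b#r)!i \<noteq> (b#r)!Suc i"
      using h by (metis Suc_less_eq length_Cons nth_Cons_Suc)
    ultimately show "adj_ok (a#b#r)" using 1 by simp
  qed
qed auto

lemma alt_adj: "alternate w x y \<longleftrightarrow> adj_ok (filter (\<lambda>z. z = x \<or> z = y) w)"
  unfolding alternate_def Let_def adj_ok_iff ..

definition wH :: "nat list" where "wH = [0,1,2,3,0,4,1,5,2,3,0,4,5,3,1,4,2,5]"
definition Cn :: "nat \<Rightarrow> nat list" where "Cn n = [6..<n+6]"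
definition wn :: "nat \<Rightarrow> nat list" where "wn n = wH @ Cn n @ Cn n @ Cn n"
definition Vn :: "nat \<Rightarrow> nat set" where "Vn n = {0..<n+6}"
definition En :: "nat \<Rightarrow> (nat \<times> nat) set" where
  "En n = EH \<union> {(x,y). 6\<le>x \<and> x<n+6 \<and> 6\<le>y \<and> y<n+6 \<and> x\<noteq>y}"

lemma six_cases: "(x::nat) < 6 \<Longrightarrow> x=0 \<or> x=1 \<or> x=2 \<or> x=3 \<or> x=4 \<or> x=5" by auto

lemma set_wH: "set wH = {0..<6}"
  unfolding wH_def by auto

lemma wH_alt: "x<6 \<Longrightarrow> y<6 \<Longrightarrow> x\<noteq>y \<Longrightarrow> alternate wH x y \<longleftrightarrow> (x,y)\<in>EH"
  unfolding alt_adj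
  by (drule six_cases, drule six_cases) (auto simp: wH_def EH_def)

lemma wH_one: "x<6 \<Longrightarrow> 6 \<le> y \<Longrightarrow> filter (\<lambda>z. z = x \<or> z = y) wH = [x,x,x]"
  by (drule six_cases) (auto simp: wH_def)

lemma wH_one': "x<6 \<Longrightarrow> 6 \<le> y \<Longrightarrow> filter (\<lambda>z. z = y \<or> z = x) wH = [x,x,x]"
  by (drule six_cases) (auto simp: wH_def)

lemma wH_none: "6 \<le> x \<Longrightarrow> 6 \<le> y \<Longrightarrow> filter (\<lambda>z. z = x \<or> z = y) wH = []"
  by (auto simp: wH_def)

lemma C_none: "x<6 \<Longrightarrow> y<6 \<Longrightarrow> filter (\<lambda>z. z = x \<or> z = y) (Cn n) = []"
  unfolding Cn_def by (auto simp: filter_empty_conv)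

lemma upt_filter2: assumes "a\<le>x" "x<y" "y<b"
  shows "filter (\<lambda>z. z = x \<or> z = y) [a..<b] = [x,y]"
proof -
  have s: "sorted (filter (\<lambda>z. z = x \<or> z = y) [a..<b])" by (intro sorted_wrt_filter) simp
  have d: "distinct (filter (\<lambda>z. z = x \<or> z = y) [a..<b])" by simp
  have st: "set (filter (\<lambda>z. z = x \<or> z = y) [a..<b]) = set [x,y]" using assms by auto
  show ?thesis using sorted_distinct_set_unique[OF s d _ _ st] assms by simp
qed

lemma upt_filter1: assumes "a\<le>y" "y<b" "\<not>(a\<le>x \<and> x<b)"
  shows "filter (\<lambda>z. z = x \<or> z = y) [a..<b] = [y]"
proof -
  have s: "sorted (filter (\<lambda>z. z = x \<or> z = y) [a..<b])" by (intro sorted_wrt_filter) simp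
  have d: "distinct (filter (\<lambda>z. z = x \<or> z = y) [a..<b])" by simp
  have st: "set (filter (\<lambda>z. z = x \<or> z = y) [a..<b]) = set [y]" using assms by auto
  show ?thesis using sorted_distinct_set_unique[OF s d _ _ st] assms by simp
qed

lemma count_distinct: "distinct xs \<Longrightarrow> count_list xs x = (if x \<in> set xs then 1 else 0)"
  by (induction xs) auto

lemma count_pos: "x \<in> set w \<Longrightarrow> count_list w x > 0"
  by (induction w) auto

lemma wH_count: "x<6 \<Longrightarrow> count_list wH x = 3"
  by (drule six_cases) (auto simp: wH_def)

lemma wH_count0: "6\<le>x \<Longrightarrow> count_list wH x = 0"
  by (auto simp: wH_def)

lemma uniform_wn: "uniform 3 (wn n)"
  unfolding uniform_def wn_def
proof
  fix x assume "x \<in> set (wH @ Cn n @ Cn n @ Cn n)"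
  show "count_list (wH @ Cn n @ Cn n @ Cn n) x = 3"
  proof (cases "x<6")
    case True
    then show ?thesis by (simp add: wH_count count_distinct Cn_def)
  next
    case False
    then have "x \<in> set (Cn n)" using \<open>x \<in> _\<close> set_wH by auto
    then show ?thesis using False by (simp add: wH_count0 count_distinct Cn_def)
  qed
qed

lemma set_wn: "set (wn n) = Vn n"
proof -
  have "set (wn n) = {0..<6} \<union> {6..<n+6}" unfolding wn_def Cn_def by (simp add: set_wH)
  also have "\<dots> = {0..<n+6}" by auto
  finally show ?thesis unfolding Vn_def .
qed

lemma alt_wn: assumes "x \<in> Vn n" "y \<in> Vn n" "x\<noteq>y"
  shows "alternate (wn n) x y \<longleftrightarrow> (x,y) \<in> En n"
proof -
  let ?P = "\<lambda>z. z = x \<or> z = y"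
  have f: "filter ?P (wn n) = filter ?P wH @ filter ?P (Cn n) @ filter ?P (Cn n) @ filter ?P (Cn n)"
    unfolding wn_def by simp
  consider "x<6" "y<6" | "x<6" "6\<le>y" | "6\<le>x" "y<6" | "6\<le>x" "6\<le>y" by linarith
  then show ?thesis
  proof cases
    case 1
    then show ?thesis using f C_none[OF 1, of n] wH_alt[OF 1 assms(3)] unfolding alt_adj En_def by simp
  next
    case 2
    have "filter ?P (Cn n) = [y]" unfolding Cn_def using 2 assms by (intro upt_filter1) (auto simp: Vn_def)
    then show ?thesis using f wH_one[OF 2] 2 EH_lt[of x y] unfolding alt_adj En_def by auto
  next
    case 3
    have "filter ?P (Cn n) = [x]" unfolding Cn_def using 3 assms upt_filter1[of 6 x "n+6" y]
      by (auto simp: Vn_def disj_commute)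
    moreover have "filter ?P wH = [y,y,y]" using wH_one'[of y x] 3 by simp
    ultimately show ?thesis using f 3 EH_lt[of x y] unfolding alt_adj En_def by auto
  next
    case 4
    have e: "(x,y) \<in> En n" using 4 assms unfolding En_def Vn_def by auto
    show ?thesis
    proof (cases "x<y")
      case True
      have "filter ?P (Cn n) = [x,y]" unfolding Cn_def using 4 True assms by (intro upt_filter2) (auto simp: Vn_def)
      then show ?thesis using f wH_none[OF 4] e assms(3) unfolding alt_adj by simp
    next
      case False
      then have "y<x" using assms(3) by simp
      then have "filter ?P (Cn n) = [y,x]" unfolding Cn_def using 4 assms upt_filter2[of 6 y x "n+6"]
        by (auto simp: Vn_def disj_commute)
      then show ?thesis using f wH_none[OF 4] e assms(3) unfolding alt_adj by simp
    qed
  qed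
qed

lemma rep_wn: "represents (wn n) (Vn n) (En n)"
  unfolding represents_def using set_wn alt_wn by blast

lemma count_filter: "P x \<Longrightarrow> count_list (filter P w) x = count_list w x"
  by (induction w) auto

lemma len_two: "set u \<subseteq> {x,y} \<Longrightarrow> x\<noteq>y \<Longrightarrow> length u = count_list u x + count_list u y"
  by (induction u) auto

lemma len2: "length u = 2 \<Longrightarrow> \<exists>a b. u = [a,b]"
  by (auto simp: numeral_2_eq_2 length_Suc_conv)

lemma one_alt: assumes "count_list w x = 1" "count_list w y = 1" "x \<noteq> y"
  shows "alternate w x y"
proof -
  let ?u = "filter (\<lambda>z. z = x \<or> z = y) w"
  have cx: "count_list ?u x = 1" using assms count_filter[of "\<lambda>z. z = x \<or> z = y" x w] by simp
  have cy: "count_list ?u y = 1" using assms count_filter[of "\<lambda>z. z = x \<or> z = y" y w] by simp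
  have "set ?u \<subseteq> {x,y}" by auto
  then have "length ?u = 2" using len_two[of ?u x y] cx cy assms(3) by auto
  then obtain a b where u: "?u = [a,b]" using len2 by blast
  have "a \<noteq> b"
  proof
    assume "a = b"
    have "a \<in> set ?u" using u by simp
    then have "a = x \<or> a = y" by simp
    then show False using cx cy u \<open>a=b\<close> by auto
  qed
  then show ?thesis unfolding alt_adj u by simp
qed

lemma sg_n: "simple_graph (Vn n) (En n)"
proof -
  have "sym {(x,y). 6\<le>x \<and> x<n+6 \<and> 6\<le>y \<and> y<n+6 \<and> (x::nat)\<noteq>y}" by (auto simp: sym_def)
  then have s: "sym (En n)" unfolding En_def using sym_EH by (rule sym_Un[rotated])
  have i: "irrefl (En n)" using irr_EH unfolding En_def irrefl_def by auto
  have "En n \<subseteq> Vn n \<times> Vn n" unfolding En_def Vn_def using EH_lt by fastforce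
  then show ?thesis unfolding simple_graph_def using s i by (simp add: Vn_def)
qed

lemma rn_n: "representation_number (Vn n) (En n) = 3"
  unfolding representation_number_def
proof (rule Least_equality)
  show "k_word_representable 3 (Vn n) (En n)"
    unfolding k_word_representable_def using uniform_wn rep_wn by blast
next
  fix k assume "k_word_representable k (Vn n) (En n)"
  then obtain w where u: "uniform k w" and r: "represents w (Vn n) (En n)"
    unfolding k_word_representable_def by blast
  have sw: "set w = Vn n" and al: "\<And>x y. x\<in>Vn n \<Longrightarrow> y\<in>Vn n \<Longrightarrow> x\<noteq>y \<Longrightarrow> alternate w x y \<longleftrightarrow> (x,y)\<in>En n"
    using r unfolding represents_def by auto
  have cnt: "\<And>x. x \<in> Vn n \<Longrightarrow> count_list w x = k" using u sw unfolding uniform_def by auto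
  have in6: "\<And>x. x < 6 \<Longrightarrow> x \<in> Vn n" by (simp add: Vn_def)
  show "3 \<le> k"
  proof (rule ccontr)
    assume "\<not> 3 \<le> k"
    then consider "k = 0" | "k = 1" | "k = 2" by linarith
    then show False
    proof cases
      case 1
      then show False using cnt[OF in6[of 0]] count_pos[of 0 w] sw in6[of 0] by simp
    next
      case 2
      have "alternate w 0 4" using one_alt[of w 0 4] cnt in6 2 by simp
      moreover have "(0,4) \<notin> En n" by (simp add: En_def EH_def)
      ultimately show False using al[OF in6[of 0] in6[of 4]] by simp
    next
      case 3
      show False
      proof (rule no2[of w])
        show "\<forall>x\<in>{0..<6::nat}. count_list w x = 2" using cnt in6 3 by simp
        show "\<forall>x\<in>{0..<6::nat}. \<forall>y\<in>{0..<6}. x \<noteq> y \<longrightarrow> (alternate w x y \<longleftrightarrow> (x,y) \<in> EH)"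
          using al in6 by (auto simp: En_def)
      qed
    qed
  qed
qed

lemma R3_n: "in_R3 (Vn n) (En n)"
  unfolding in_R3_def word_representable_def using sg_n rn_n rep_wn by blast

lemma not_col: "\<not> colorable c (Vn (Suc c)) (En (Suc c))"
proof
  assume "colorable c (Vn (Suc c)) (En (Suc c))"
  then obtain f :: "nat \<Rightarrow> nat" where f1: "\<forall>v\<in>Vn (Suc c). f v < c" and f2: "\<forall>(x, y)\<in>En (Suc c). f x \<noteq> f y"
    unfolding colorable_def by blast
  let ?C = "{6..<c+7}"
  have "inj_on f ?C"
  proof (rule inj_onI)
    fix x y assume "x \<in> ?C" "y \<in> ?C" "f x = f y"
    then show "x = y" using f2 unfolding En_def by auto
  qed
  moreover have "f ` ?C \<subseteq> {..<c}" using f1 unfolding Vn_def by auto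
  ultimately have "card ?C \<le> card {..<c}" by (meson card_inj_on_le finite_lessThan)
  then show False by simp
qed

theorem theorem18:
  shows "\<not> (\<exists>c :: nat. \<forall>V E. in_R3 V E \<longrightarrow> colorable c V E)"
proof
  assume "\<exists>c :: nat. \<forall>V E. in_R3 V E \<longrightarrow> colorable c V E"
  then obtain c :: nat where "\<forall>V E. in_R3 V E \<longrightarrow> colorable c V E" by blast
  then show False using R3_n[of "Suc c"] not_col[of c] by blast
qed

end
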